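(* Let $F$ be a safe sentence, let $I$ be an interpretation of the object and predicate constants occurring in $F$, and let $X$ be any superset of the universe of $I$. Then the extension of $I$ to $X$ is a stable model of $F$ if and only if $I$ is a stable model of $F$.
   Context: Formulas are first-order formulas over a signature with object constants, predicate constants and equality, but no function constants of arity $>0$. Primitive connectives are $\bot,\land,\lor,\rightarrow$, quantifiers $\forall,\exists$; $\neg G$ is $G\rightarrow\bot$, $\top$ is $\bot\rightarrow\bot$, $G\leftrightarrow H$ is $(G\rightarrow H)\land(H\rightarrow G)$. A sentence is a formula without free variables. Stable models: for a sentence $F$, let $\mathbf p=p_1,\dots,p_n$ be all predicate constants occurring in $F$ and $\mathbf u=u_1,\dots,u_n$ distinct predicate variables with matching arities. $\mathbf u\le\mathbf p$ is $\bigwedge_i\forall\mathbf x(u_i(\mathbf x)\rightarrow p_i(\mathbf x))$, $\mathbf u=\mathbf p$ is $\bigwedge_i\forall\mathbf x(u_i(\mathbf x)\leftrightarrow p_i(\mathbf x))$, $\mathbf u<\mathbf p$ is $(\mathbf u\le\mathbf p)\land\neg(\mathbf u=\mathbf p)$. $F^*(\mathbf u)$: $p_i(\mathbf t)^*=u_i(\mathbf t)$; $(t_1=t_2)^*=(t_1=t_2)$; $\bot^*=\bot$; $(G\land H)^*=G^*\land H^*$; $(G\lor H)^*=G^*\lor H^*$; $(G\rightarrow H)^*=(G^*\rightarrow H^* )\land(G\rightarrow H)$; $(\forall xG)^*=\forall xG^*$; $(\exists xG)^*=\exists xG^*$. $\mathrm{SM}[F]$ is $F\land\neg\exists\mathbf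 u((\mathbf u<\mathbf p)\land F^*(\mathbf u))$. An interpretation of the object and predicate constants occurring in $F$ is a stable model of $F$ if it satisfies $\mathrm{SM}[F]$. Extension: if $I$ is an interpretation of a set of object and predicate constants and $X$ is a superset of the universe of $I$, the extension of $I$ to $X$ is the interpretation of the same constants with universe $X$ in which each object constant denotes the same object as in $I$ and each predicate constant denotes the same set of tuples as in $I$. Restricted variables: for quantifier-free $G$, $\mathrm{RV}(G)$ is: $\emptyset$ if $G$ is an equality between two variables; the set of variables of $G$ if $G$ is any other atomic formula; $\mathrm{RV}(\bot)=\emptyset$; $\mathrm{RV}(G\land H)=\mathrm{RV}(G)\cup\mathrm{RV}(H)$; $\mathrm{RV}(G\lor H)=\mathrm{RV}(G)\cap\mathrm{RV}(H)$; $\mathrm{RV}(G\rightarrow H)=\emptyset$. An occurrence of a subformula or variable is positive if the number of implications containing it in their antecedent is even, negative otherwise, and strictly positive if it is in the antecedent of no implication. A prenex sentence $Q_1x_1\cdots Q_nx_nM$ ($M$ quantifier-free, $x_i$ distinct) is semi-safe if every strictly positive occurrence of every $x_i$ in $M$ belongs to a subformula $G\rightarrow H$ with $x_i\in\mathrm{RV}(G)$. Simplification transformations: $\neg\bot\mapsto\top$, $\neg\top\mapsto\bot$; $\bot\land G\mapsto\bot$, $G\land\bot\mapsto\bot$, $\top\land G\mapsto G$, $G\land\top\mapsto G$; $\bot\lor G\mapsto G$, $G\lor\bot\mapsto G$, $\top\lor G\mapsto\top$, $G\lor\top\mapsto\top$; $\bot\rightarrow G\mapsto\top$, $G\rightarrow\top\mapsto\top$,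 $\top\rightarrow G\mapsto G$. A variable $x$ is positively (resp. negatively) weakly restricted in a quantifier-free formula $G$ if the formula obtained from $G$ by first replacing every atomic formula $A$ of $G$ with $x\in\mathrm{RV}(A)$ by $\bot$ and then applying the simplification transformations is $\top$ (resp. $\bot$). A semi-safe prenex sentence $Q_1x_1\cdots Q_nx_nM$ is safe if for every occurrence of every variable $x_i$: (a) if $Q_i=\forall$, the occurrence belongs to a positive subformula (of the sentence) in which $x_i$ is positively weakly restricted, or to a negative subformula in which $x_i$ is negatively weakly restricted; (b) if $Q_i=\exists$, the occurrence belongs to a negative subformula in which $x_i$ is positively weakly restricted, or to a positive subformula in which $x_i$ is negatively weakly restricted. *)

theory Defs
  imports Main
begin

datatype 'c trm = Var nat | Cst 'c

datatype ('p, 'c) form =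
    FBot
  | FPred 'p "'c trm list"
  | FEq "'c trm" "'c trm"
  | FAnd "('p, 'c) form" "('p, 'c) form"
  | FOr "('p, 'c) form" "('p, 'c) form"
  | FImp "('p, 'c) form" "('p, 'c) form"
  | FAll nat "('p, 'c) form"
  | FEx nat "('p, 'c) form"

definition FNeg :: "('p, 'c) form \<Rightarrow> ('p, 'c) form" where
  "FNeg G = FImp G FBot"

definition FTop :: "('p, 'c) form" where
  "FTop = FImp FBot FBot"

fun tvars :: "'c trm \<Rightarrow> nat set" where
  "tvars (Var v) = {v}"
| "tvars (Cst k) = {}"

fun fv :: "('p, 'c) form \<Rightarrow> nat set" where
  "fv FBot = {}"
| "fv (FPred p ts) = (\<Union>t\<in>set ts. tvars t)"
| "fv (FEq s t) = tvars s \<union> tvars t"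
| "fv (FAnd G H) = fv G \<union> fv H"
| "fv (FOr G H) = fv G \<union> fv H"
| "fv (FImp G H) = fv G \<union> fv H"
| "fv (FAll x G) = fv G - {x}"
| "fv (FEx x G) = fv G - {x}"

definition sentence :: "('p, 'c) form \<Rightarrow> bool" where
  "sentence F \<longleftrightarrow> fv F = {}"

fun preds :: "('p, 'c) form \<Rightarrow> 'p set" where
  "preds FBot = {}"
| "preds (FPred p ts) = {p}"
| "preds (FEq s t) = {}"
| "preds (FAnd G H) = preds G \<union> preds H"
| "preds (FOr G H) = preds G \<union> preds H"
| "preds (FImp G H) = preds G \<union> preds H"
| "preds (FAll x G) = preds G"
| "preds (FEx x G) = preds G"

fun toconsts :: "'c trm \<Rightarrow> 'c set" where
  "toconsts (Var v) = {}"
| "toconsts (Cst k) = {k}"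

fun oconsts :: "('p, 'c) form \<Rightarrow> 'c set" where
  "oconsts FBot = {}"
| "oconsts (FPred p ts) = (\<Union>t\<in>set ts. toconsts t)"
| "oconsts (FEq s t) = toconsts s \<union> toconsts t"
| "oconsts (FAnd G H) = oconsts G \<union> oconsts H"
| "oconsts (FOr G H) = oconsts G \<union> oconsts H"
| "oconsts (FImp G H) = oconsts G \<union> oconsts H"
| "oconsts (FAll x G) = oconsts G"
| "oconsts (FEx x G) = oconsts G"

fun wf_form :: "('p \<Rightarrow> nat) \<Rightarrow> ('p, 'c) form \<Rightarrow> bool" where
  "wf_form ar FBot = True"
| "wf_form ar (FPred p ts) = (length ts = ar p)"
| "wf_form ar (FEq s t) = True"
| "wf_form ar (FAnd G H) = (wf_form ar G \<and> wf_form ar H)"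
| "wf_form ar (FOr G H) = (wf_form ar G \<and> wf_form ar H)"
| "wf_form ar (FImp G H) = (wf_form ar G \<and> wf_form ar H)"
| "wf_form ar (FAll x G) = wf_form ar G"
| "wf_form ar (FEx x G) = wf_form ar G"

fun qfree :: "('p, 'c) form \<Rightarrow> bool" where
  "qfree (FAnd G H) = (qfree G \<and> qfree H)"
| "qfree (FOr G H) = (qfree G \<and> qfree H)"
| "qfree (FImp G H) = (qfree G \<and> qfree H)"
| "qfree (FAll x G) = False"
| "qfree (FEx x G) = False"
| "qfree _ = True"

text \<open>An interpretation: universe U (a set), denotations of object constants c,
  extensions of predicate constants P (sets of tuples, as lists).\<close>

fun evalt :: "('c \<Rightarrow> 'a) \<Rightarrow> (nat \<Rightarrow> 'a) \<Rightarrow> 'c trm \<Rightarrow> 'a" where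
  "evalt c env (Var v) = env v"
| "evalt c env (Cst k) = c k"

fun sat :: "'a set \<Rightarrow> ('c \<Rightarrow> 'a) \<Rightarrow> ('p \<Rightarrow> 'a list set) \<Rightarrow> (nat \<Rightarrow> 'a)
             \<Rightarrow> ('p, 'c) form \<Rightarrow> bool" where
  "sat U c P env FBot = False"
| "sat U c P env (FPred p ts) = (map (evalt c env) ts \<in> P p)"
| "sat U c P env (FEq s t) = (evalt c env s = evalt c env t)"
| "sat U c P env (FAnd G H) = (sat U c P env G \<and> sat U c P env H)"
| "sat U c P env (FOr G H) = (sat U c P env G \<or> sat U c P env H)"
| "sat U c P env (FImp G H) = (sat U c P env G \<longrightarrow> sat U c P env H)"
| "sat U c P env (FAll x G) = (\<forall>a\<in>U. sat U c P (env(x := a)) G)"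
| "sat U c P env (FEx x G) = (\<exists>a\<in>U. sat U c P (env(x := a)) G)"

definition models :: "'a set \<Rightarrow> ('c \<Rightarrow> 'a) \<Rightarrow> ('p \<Rightarrow> 'a list set) \<Rightarrow> ('p, 'c) form \<Rightarrow> bool" where
  "models U c P F \<longleftrightarrow> (\<forall>env. (\<forall>v. env v \<in> U) \<longrightarrow> sat U c P env F)"

definition tuples :: "('p \<Rightarrow> nat) \<Rightarrow> 'p \<Rightarrow> 'a set \<Rightarrow> 'a list set" where
  "tuples ar p U = {xs. length xs = ar p \<and> set xs \<subseteq> U}"

definition wf_interp :: "('p \<Rightarrow> nat) \<Rightarrow> ('p, 'c) form \<Rightarrow> 'a set \<Rightarrow> ('c \<Rightarrow> 'a)
                          \<Rightarrow> ('p \<Rightarrow> 'a list set) \<Rightarrow> bool" where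
  "wf_interp ar F U c P \<longleftrightarrow> U \<noteq> {} \<and> (\<forall>k\<in>oconsts F. c k \<in> U)
     \<and> (\<forall>p\<in>preds F. P p \<subseteq> tuples ar p U)"

text \<open>The transformation F*(u): predicate constant p is rendered as Inl p,
  the corresponding predicate variable u_p as Inr p.\<close>
fun star :: "('p, 'c) form \<Rightarrow> ('p + 'p, 'c) form" where
  "star FBot = FBot"
| "star (FPred p ts) = FPred (Inr p) ts"
| "star (FEq s t) = FEq s t"
| "star (FAnd G H) = FAnd (star G) (star H)"
| "star (FOr G H) = FOr (star G) (star H)"
| "star (FImp G H) = FAnd (FImp (star G) (star H)) (FImp (map_form Inl id G) (map_form Inl id H))"
| "star (FAll x G) = FAll x (star G)"
| "star (FEx x G) = FEx x (star G)"

text \<open>SM[F] holds in the interpretation (U, c, P); the second-order quantifier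
  over u ranges over relations on U of the appropriate arities.\<close>
definition stable_model :: "('p \<Rightarrow> nat) \<Rightarrow> ('p, 'c) form \<Rightarrow> 'a set \<Rightarrow> ('c \<Rightarrow> 'a)
                             \<Rightarrow> ('p \<Rightarrow> 'a list set) \<Rightarrow> bool" where
  "stable_model ar F U c P \<longleftrightarrow>
     models U c P F \<and>
     \<not> (\<exists>Q. (\<forall>p\<in>preds F. Q p \<subseteq> tuples ar p U)
          \<and> (\<forall>p\<in>preds F. Q p \<subseteq> P p)
          \<and> \<not> (\<forall>p\<in>preds F. Q p = P p)
          \<and> models U c (\<lambda>r. case r of Inl p \<Rightarrow> P p | Inr p \<Rightarrow> Q p) (star F))"

text \<open>Restricted variables (for quantifier-free formulas; quantified cases unused).\<close>
fun RV :: "('p, 'c) form \<Rightarrow> nat set" where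
  "RV FBot = {}"
| "RV (FPred p ts) = fv (FPred p ts)"
| "RV (FEq (Var x) (Var y)) = {}"
| "RV (FEq s t) = tvars s \<union> tvars t"
| "RV (FAnd G H) = RV G \<union> RV H"
| "RV (FOr G H) = RV G \<inter> RV H"
| "RV (FImp G H) = {}"
| "RV (FAll x G) = {}"
| "RV (FEx x G) = {}"

text \<open>Semi-safety condition for a variable x in matrix M: every strictly positive
  occurrence of x belongs to a subformula G \<rightarrow> H with x in RV G.\<close>
fun sp_ok :: "nat \<Rightarrow> ('p, 'c) form \<Rightarrow> bool" where
  "sp_ok x FBot = True"
| "sp_ok x (FPred p ts) = (x \<notin> fv (FPred p ts))"
| "sp_ok x (FEq s t) = (x \<notin> (tvars s \<union> tvars t))"
| "sp_ok x (FAnd G H) = (sp_ok x G \<and> sp_ok x H)"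
| "sp_ok x (FOr G H) = (sp_ok x G \<and> sp_ok x H)"
| "sp_ok x (FImp G H) = (x \<in> RV G \<or> sp_ok x H)"
| "sp_ok x (FAll y G) = sp_ok x G"
| "sp_ok x (FEx y G) = sp_ok x G"

fun repl :: "nat \<Rightarrow> ('p, 'c) form \<Rightarrow> ('p, 'c) form" where
  "repl x FBot = FBot"
| "repl x (FPred p ts) = (if x \<in> RV (FPred p ts) then FBot else FPred p ts)"
| "repl x (FEq s t) = (if x \<in> RV (FEq s t :: ('p, 'c) form) then FBot else FEq s t)"
| "repl x (FAnd G H) = FAnd (repl x G) (repl x H)"
| "repl x (FOr G H) = FOr (repl x G) (repl x H)"
| "repl x (FImp G H) = FImp (repl x G) (repl x H)"
| "repl x (FAll y G) = FAll y (repl x G)"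
| "repl x (FEx y G) = FEx y (repl x G)"

text \<open>Simplification transformations, applied exhaustively (bottom-up normalisation).\<close>
definition s_and :: "('p, 'c) form \<Rightarrow> ('p, 'c) form \<Rightarrow> ('p, 'c) form" where
  "s_and G H = (if G = FBot \<or> H = FBot then FBot
                else if G = FTop then H else if H = FTop then G else FAnd G H)"

definition s_or :: "('p, 'c) form \<Rightarrow> ('p, 'c) form \<Rightarrow> ('p, 'c) form" where
  "s_or G H = (if G = FTop \<or> H = FTop then FTop
               else if G = FBot then H else if H = FBot then G else FOr G H)"

definition s_imp :: "('p, 'c) form \<Rightarrow> ('p, 'c) form \<Rightarrow> ('p, 'c) form" where
  "s_imp G H = (if G = FBot \<or> H = FTop then FTop
                else if G = FTop then H else FImp G H)"

fun simpl :: "('p, 'c) form \<Rightarrow> ('p, 'c) form" where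
  "simpl (FAnd G H) = s_and (simpl G) (simpl H)"
| "simpl (FOr G H) = s_or (simpl G) (simpl H)"
| "simpl (FImp G H) = s_imp (simpl G) (simpl H)"
| "simpl G = G"

definition pos_wr :: "nat \<Rightarrow> ('p, 'c) form \<Rightarrow> bool" where
  "pos_wr x G \<longleftrightarrow> simpl (repl x G) = FTop"

definition neg_wr :: "nat \<Rightarrow> ('p, 'c) form \<Rightarrow> bool" where
  "neg_wr x G \<longleftrightarrow> simpl (repl x G) = FBot"

text \<open>Condition (a) (q = True, universal) / (b) (q = False, existential) for a
  subformula G of polarity pol (True = positive).\<close>
definition wr_cond :: "nat \<Rightarrow> bool \<Rightarrow> bool \<Rightarrow> ('p, 'c) form \<Rightarrow> bool" where
  "wr_cond x q pol G \<longleftrightarrow>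
     (if q then (pol \<and> pos_wr x G) \<or> (\<not> pol \<and> neg_wr x G)
      else (\<not> pol \<and> pos_wr x G) \<or> (pol \<and> neg_wr x G))"

text \<open>safe_occ x q pol M: every occurrence of x in M (a subformula of polarity pol)
  belongs to a subformula of M satisfying wr_cond.\<close>
fun safe_occ :: "nat \<Rightarrow> bool \<Rightarrow> bool \<Rightarrow> ('p, 'c) form \<Rightarrow> bool" where
  "safe_occ x q pol FBot = True"
| "safe_occ x q pol (FPred p ts) = (wr_cond x q pol (FPred p ts) \<or> x \<notin> fv (FPred p ts))"
| "safe_occ x q pol (FEq s t) = (wr_cond x q pol (FEq s t :: ('p, 'c) form) \<or> x \<notin> (tvars s \<union> tvars t))"
| "safe_occ x q pol (FAnd G H) = (wr_cond x q pol (FAnd G H) \<or>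
      (safe_occ x q pol G \<and> safe_occ x q pol H))"
| "safe_occ x q pol (FOr G H) = (wr_cond x q pol (FOr G H) \<or>
      (safe_occ x q pol G \<and> safe_occ x q pol H))"
| "safe_occ x q pol (FImp G H) = (wr_cond x q pol (FImp G H) \<or>
      (safe_occ x q (\<not> pol) G \<and> safe_occ x q pol H))"
| "safe_occ x q pol (FAll y G) = False"
| "safe_occ x q pol (FEx y G) = False"

fun quant :: "(bool \<times> nat) list \<Rightarrow> ('p, 'c) form \<Rightarrow> ('p, 'c) form" where
  "quant [] M = M"
| "quant ((True, x) # qs) M = FAll x (quant qs M)"
| "quant ((False, x) # qs) M = FEx x (quant qs M)"

definition prenex_sentence :: "(bool \<times> nat) list \<Rightarrow> ('p, 'c) form \<Rightarrow> ('p, 'c) form \<Rightarrow> bool" where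
  "prenex_sentence qs M F \<longleftrightarrow> F = quant qs M \<and> qfree M \<and> distinct (map snd qs) \<and> sentence F"

definition semi_safe :: "('p, 'c) form \<Rightarrow> bool" where
  "semi_safe F \<longleftrightarrow> (\<exists>qs M. prenex_sentence qs M F \<and> (\<forall>x\<in>snd ` set qs. sp_ok x M))"

definition safe :: "('p, 'c) form \<Rightarrow> bool" where
  "safe F \<longleftrightarrow> (\<exists>qs M. prenex_sentence qs M F
      \<and> (\<forall>x\<in>snd ` set qs. sp_ok x M)
      \<and> (\<forall>(q, x)\<in>set qs. safe_occ x q True M))"

end

theory Submission
  imports Defs
begin
lemma evalt_agree: "(\<forall>v\<in>tvars t. e v = e' v) \<Longrightarrow> evalt c e t = evalt c e' t"
  by (cases t) auto

lemma sat_agree: "(\<forall>v\<in>fv G. e v = e' v) \<Longrightarrow> sat V c R e G = sat V c R e' G"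
proof (induction G arbitrary: e e')
  case (FPred p ts)
  then have "map (evalt c e) ts = map (evalt c e') ts"
    by (auto intro!: map_cong evalt_agree)
  then show ?case unfolding sat.simps by metis
next
  case (FEq s t) then show ?case using evalt_agree[of s e e' c] evalt_agree[of t e e' c] by auto
next
  case (FAll x G)
  have "sat V c R (e(x:=a)) G = sat V c R (e'(x:=a)) G" for a
    using FAll.prems by (intro FAll.IH) auto
  then show ?case by simp
next
  case (FEx x G)
  have "sat V c R (e(x:=a)) G = sat V c R (e'(x:=a)) G" for a
    using FEx.prems by (intro FEx.IH) auto
  then show ?case by simp
next
  case (FAnd G H)
  have "sat V c R e G = sat V c R e' G" "sat V c R e H = sat V c R e' H"
    using FAnd.prems by (intro FAnd.IH; auto)+
  then show ?case by simp
next
  case (FOr G H)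
  have "sat V c R e G = sat V c R e' G" "sat V c R e H = sat V c R e' H"
    using FOr.prems by (intro FOr.IH; auto)+
  then show ?case by simp
next
  case (FImp G H)
  have "sat V c R e G = sat V c R e' G" "sat V c R e H = sat V c R e' H"
    using FImp.prems by (intro FImp.IH; auto)+
  then show ?case by simp
qed auto

lemma map_trm_id': "map_trm (\<lambda>a. a) = (\<lambda>t. t)"
  by (rule ext, case_tac t) auto

lemma sat_map_Inl: "sat V c R e (map_form Inl id G) = sat V c (\<lambda>p. R (Inl p)) e G"
proof (induction G arbitrary: e)
  case (FPred p ts)
  have "map (evalt c e) (map (map_trm id) ts) = map (evalt c e) ts"
    by (simp add: trm.map_id)
  then show ?case by (simp add: map_trm_id' comp_def)
next
  case (FEq s t) then show ?case by (simp add: map_trm_id')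
qed auto

lemma sat_FTop[simp]: "sat V c R e FTop" by (simp add: FTop_def)

lemma sat_s_and[simp]: "sat V c R e (s_and a b) = (sat V c R e a \<and> sat V c R e b)"
  by (auto simp: s_and_def FTop_def)
lemma sat_s_or[simp]: "sat V c R e (s_or a b) = (sat V c R e a \<or> sat V c R e b)"
  by (auto simp: s_or_def FTop_def)
lemma sat_s_imp[simp]: "sat V c R e (s_imp a b) = (sat V c R e a \<longrightarrow> sat V c R e b)"
  by (auto simp: s_imp_def FTop_def)

lemma sat_simpl: "sat V c R e (simpl G) = sat V c R e G"
  by (induction G rule: simpl.induct) simp_all

lemma repl_sound:
  assumes "qfree G" "\<forall>p\<in>preds G. \<forall>xs\<in>R p. set xs \<subseteq> U" "\<forall>k\<in>oconsts G. c k \<in> U" "e x \<notin> U"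
  shows "sat V c R e (repl x G) = sat V c R e G"
  using assms
proof (induction G)
  case (FPred p ts)
  show ?case
  proof (cases "x \<in> RV (FPred p ts)")
    case True
    then obtain t where t: "t \<in> set ts" "x \<in> tvars t" by auto
    have "t = Var x" using t(2) by (cases t) auto
    then have "e x \<in> set (map (evalt c e) ts)" using t by force
    then have "map (evalt c e) ts \<notin> R p" using FPred.prems(2,4) by (metis preds.simps(2) singletonI subsetD)
    then show ?thesis using True by simp
  qed simp
next
  case (FEq s t)
  then show ?case by (cases s; cases t) auto
qed auto

lemma s_and_Top: "s_and a b = FTop \<Longrightarrow> a = FTop \<and> b = FTop"
  unfolding s_and_def by (cases "a = FBot \<or> b = FBot"; cases "a = FTop"; cases "b = FTop") (auto simp: FTop_def)
lemma s_and_Bot: "s_and a b = FBot \<Longrightarrow> a = FBot \<or> b = FBot"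
  unfolding s_and_def by (cases "a = FBot \<or> b = FBot"; cases "a = FTop"; cases "b = FTop") (auto simp: FTop_def)
lemma s_or_Top: "s_or a b = FTop \<Longrightarrow> a = FTop \<or> b = FTop"
  unfolding s_or_def by (cases "a = FTop \<or> b = FTop"; cases "a = FBot"; cases "b = FBot") (auto simp: FTop_def)
lemma s_or_Bot: "s_or a b = FBot \<Longrightarrow> a = FBot \<and> b = FBot"
  unfolding s_or_def by (cases "a = FTop \<or> b = FTop"; cases "a = FBot"; cases "b = FBot") (auto simp: FTop_def)
lemma s_imp_Top: "s_imp a b = FTop \<Longrightarrow> a = FBot \<or> b = FTop"
  unfolding s_imp_def by (cases "a = FBot \<or> b = FTop"; cases "a = FTop") (auto simp: FTop_def)
lemma s_imp_Bot: "s_imp a b = FBot \<Longrightarrow> a = FTop \<and> b = FBot"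
  unfolding s_imp_def by (cases "a = FBot \<or> b = FTop"; cases "a = FTop") (auto simp: FTop_def)

lemma sat_Inl_Top: "simpl G = FTop \<Longrightarrow> sat V c R e (map_form Inl id G)"
  by (metis sat_FTop sat_map_Inl sat_simpl)
lemma sat_Inl_Bot: "simpl G = FBot \<Longrightarrow> \<not> sat V c R e (map_form Inl id G)"
  by (metis sat.simps(1) sat_map_Inl sat_simpl)

lemma simpl_star: "(simpl G = FTop \<longrightarrow> sat V c R e (star G)) \<and> (simpl G = FBot \<longrightarrow> \<not> sat V c R e (star G))"
proof (induction G)
  case (FAnd G H)
  show ?case
  proof (intro conjI impI)
    assume "simpl (FAnd G H) = FTop"
    then have "simpl G = FTop" "simpl H = FTop" using s_and_Top by auto
    then show "sat V c R e (star (FAnd G H))" using FAnd.IH by simp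
  next
    assume "simpl (FAnd G H) = FBot"
    then have "simpl G = FBot \<or> simpl H = FBot" using s_and_Bot by auto
    then show "\<not> sat V c R e (star (FAnd G H))" using FAnd.IH by auto
  qed
next
  case (FOr G H)
  show ?case
  proof (intro conjI impI)
    assume "simpl (FOr G H) = FTop"
    then have "simpl G = FTop \<or> simpl H = FTop" using s_or_Top by auto
    then show "sat V c R e (star (FOr G H))" using FOr.IH by auto
  next
    assume "simpl (FOr G H) = FBot"
    then have "simpl G = FBot" "simpl H = FBot" using s_or_Bot by auto
    then show "\<not> sat V c R e (star (FOr G H))" using FOr.IH by simp
  qed
next
  case (FImp G H)
  show ?case
  proof (intro conjI impI)
    assume "simpl (FImp G H) = FTop"
    then have "simpl G = FBot \<or> simpl H = FTop" using s_imp_Top by auto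
    then show "sat V c R e (star (FImp G H))"
    proof (elim disjE)
      assume G: "simpl G = FBot"
      have "\<not> sat V c R e (map_form Inl id G)" using sat_Inl_Bot[OF G] .
      moreover have "\<not> sat V c R e (star G)" using FImp.IH(1) G by simp
      ultimately show ?thesis by simp
    next
      assume H: "simpl H = FTop"
      have "sat V c R e (map_form Inl id H)" using sat_Inl_Top[OF H] .
      moreover have "sat V c R e (star H)" using FImp.IH(2) H by simp
      ultimately show ?thesis by simp
    qed
  next
    assume "simpl (FImp G H) = FBot"
    then have G: "simpl G = FTop" and H: "simpl H = FBot" using s_imp_Bot by auto
    have "sat V c R e (map_form Inl id G)" using sat_Inl_Top[OF G] .
    moreover have "\<not> sat V c R e (map_form Inl id H)" using sat_Inl_Bot[OF H] .
    ultimately show "\<not> sat V c R e (star (FImp G H))" by simp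
  qed
qed (auto simp: FTop_def)

lemma repl_star:
  assumes "qfree G" "\<forall>p\<in>preds G. \<forall>xs\<in>R (Inl p) \<union> R (Inr p). set xs \<subseteq> U" "\<forall>k\<in>oconsts G. c k \<in> U" "e x \<notin> U"
  shows "sat V c R e (star (repl x G)) = sat V c R e (star G)"
  using assms
proof (induction G)
  case (FPred p ts)
  show ?case
  proof (cases "x \<in> RV (FPred p ts)")
    case True
    then obtain t where t: "t \<in> set ts" "x \<in> tvars t" by auto
    have "t = Var x" using t(2) by (cases t) auto
    then have "e x \<in> set (map (evalt c e) ts)" using t by force
    then have "map (evalt c e) ts \<notin> R (Inr p)" using FPred.prems(2,4)
      by (metis UnCI preds.simps(2) singletonI subsetD)
    then show ?thesis using True by simp
  qed simp
next
  case (FEq s t)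
  then show ?case by (cases s; cases t) auto
next
  case (FImp G H)
  have g: "\<forall>p\<in>preds G. \<forall>xs\<in>R (Inl p). set xs \<subseteq> U" "\<forall>p\<in>preds H. \<forall>xs\<in>R (Inl p). set xs \<subseteq> U"
    using FImp.prems(2) by auto
  show ?case using FImp repl_sound[of G "\<lambda>p. R (Inl p)" U c e x V] repl_sound[of H "\<lambda>p. R (Inl p)" U c e x V] g
    by (auto simp: sat_map_Inl)
qed auto

definition good :: "'a set \<Rightarrow> ('c \<Rightarrow> 'a) \<Rightarrow> ('p \<Rightarrow> 'a list set) \<Rightarrow> ('p, 'c) form \<Rightarrow> bool" where
  "good U c R G \<longleftrightarrow> (\<forall>p\<in>preds G. \<forall>xs\<in>R p. set xs \<subseteq> U) \<and> (\<forall>k\<in>oconsts G. c k \<in> U)"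

lemma wr_mono1:
  assumes "wr_cond x q pol G" "qfree G" "good U c R G" "e' x \<notin> U"
  shows "(q = pol \<longrightarrow> sat V c R e G \<longrightarrow> sat V c R e' G) \<and> (q \<noteq> pol \<longrightarrow> sat V c R e' G \<longrightarrow> sat V c R e G)"
proof -
  have "sat V c R e' G = sat V c R e' (simpl (repl x G))"
    using repl_sound[of G R U c e' x V] assms sat_simpl unfolding good_def by metis
  then show ?thesis using assms(1) unfolding wr_cond_def pos_wr_def neg_wr_def
    by (cases q; cases pol) auto
qed

lemma mono1:
  assumes "safe_occ x q pol G" "qfree G" "good U c R G" "\<forall>v. v \<noteq> x \<longrightarrow> e v = e' v" "e' x \<notin> U"
  shows "(q = pol \<longrightarrow> sat V c R e G \<longrightarrow> sat V c R e' G) \<and> (q \<noteq> pol \<longrightarrow> sat V c R e' G \<longrightarrow> sat V c R e G)"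
  using assms
proof (induction G arbitrary: pol)
  case (FPred p ts)
  then show ?case using wr_mono1[of x q pol "FPred p ts" U c R e' V e] sat_agree[of "FPred p ts" e e' V c R]
    by (metis safe_occ.simps(2))
next
  case (FEq s t)
  then show ?case using wr_mono1[of x q pol "FEq s t" U c R e' V e] sat_agree[of "FEq s t" e e' V c R]
    by (metis safe_occ.simps(3) fv.simps(3))
next
  case (FAnd G H)
  from FAnd.prems(1) consider "wr_cond x q pol (FAnd G H)" | "safe_occ x q pol G" "safe_occ x q pol H" by auto
  then show ?case
  proof cases
    case 1 then show ?thesis using wr_mono1[of x q pol "FAnd G H" U c R e' V e, OF 1 FAnd.prems(2,3,5)] by blast
  next
    case 2
    have g: "good U c R G" "good U c R H" using FAnd.prems(3) by (auto simp: good_def)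
    have "qfree G" "qfree H" using FAnd.prems(2) by auto
    show ?thesis using FAnd.IH(1)[OF 2(1) \<open>qfree G\<close> \<open>good U c R G\<close> FAnd.prems(4,5)] FAnd.IH(2)[OF 2(2) \<open>qfree H\<close> \<open>good U c R H\<close> FAnd.prems(4,5)] by auto
  qed
next
  case (FOr G H)
  from FOr.prems(1) consider "wr_cond x q pol (FOr G H)" | "safe_occ x q pol G" "safe_occ x q pol H" by auto
  then show ?case
  proof cases
    case 1 then show ?thesis using wr_mono1[of x q pol "FOr G H" U c R e' V e, OF 1 FOr.prems(2,3,5)] by blast
  next
    case 2
    have g: "good U c R G" "good U c R H" using FOr.prems(3) by (auto simp: good_def)
    have "qfree G" "qfree H" using FOr.prems(2) by auto
    show ?thesis using FOr.IH(1)[OF 2(1) \<open>qfree G\<close> \<open>good U c R G\<close> FOr.prems(4,5)] FOr.IH(2)[OF 2(2) \<open>qfree H\<close> \<open>good U c R H\<close> FOr.prems(4,5)] by auto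
  qed
next
  case (FImp G H)
  from FImp.prems(1) consider "wr_cond x q pol (FImp G H)" | "safe_occ x q (\<not>pol) G" "safe_occ x q pol H" by auto
  then show ?case
  proof cases
    case 1 then show ?thesis using wr_mono1[of x q pol "FImp G H" U c R e' V e, OF 1 FImp.prems(2,3,5)] by blast
  next
    case 2
    have g: "good U c R G" "good U c R H" using FImp.prems(3) by (auto simp: good_def)
    have "qfree G" "qfree H" using FImp.prems(2) by auto
    show ?thesis using FImp.IH(1)[OF 2(1) \<open>qfree G\<close> \<open>good U c R G\<close> FImp.prems(4,5)] FImp.IH(2)[OF 2(2) \<open>qfree H\<close> \<open>good U c R H\<close> FImp.prems(4,5)] by auto
  qed
qed auto

definition good2 :: "'a set \<Rightarrow> ('c \<Rightarrow> 'a) \<Rightarrow> ('p + 'p \<Rightarrow> 'a list set) \<Rightarrow> ('p, 'c) form \<Rightarrow> bool" where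
  "good2 U c R G \<longleftrightarrow> (\<forall>p\<in>preds G. \<forall>xs\<in>R (Inl p) \<union> R (Inr p). set xs \<subseteq> U) \<and> (\<forall>k\<in>oconsts G. c k \<in> U)"

lemma good2_good: "good2 U c R G \<Longrightarrow> good U c (\<lambda>p. R (Inl p)) G"
  by (auto simp: good2_def good_def)

lemma fv_map_Inl[simp]: "fv (map_form Inl id G) = fv G"
  by (induction G) (simp_all add: map_trm_id')

lemma fv_star[simp]: "fv (star G) = fv G"
  by (induction G) simp_all

lemma wr_mono2:
  assumes "wr_cond x q pol G" "qfree G" "good2 U c R G" "e' x \<notin> U"
  shows "(q = pol \<longrightarrow> sat V c R e (star G) \<longrightarrow> sat V c R e' (star G)) \<and> (q \<noteq> pol \<longrightarrow> sat V c R e' (star G) \<longrightarrow> sat V c R e (star G))"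
proof -
  have eq: "sat V c R e' (star (repl x G)) = sat V c R e' (star G)"
    using repl_star[of G R U c e' x V] assms unfolding good2_def by blast
  have T: "pos_wr x G \<Longrightarrow> sat V c R e' (star G)"
    using simpl_star[of "repl x G" V c R e'] eq unfolding pos_wr_def by simp
  have B: "neg_wr x G \<Longrightarrow> \<not> sat V c R e' (star G)"
    using simpl_star[of "repl x G" V c R e'] eq unfolding neg_wr_def by simp
  show ?thesis using assms(1) T B unfolding wr_cond_def
    by (cases q; cases pol) auto
qed

lemma mono2:
  assumes "safe_occ x q pol G" "qfree G" "good2 U c R G" "\<forall>v. v \<noteq> x \<longrightarrow> e v = e' v" "e' x \<notin> U"
  shows "(q = pol \<longrightarrow> sat V c R e (star G) \<longrightarrow> sat V c R e' (star G)) \<and> (q \<noteq> pol \<longrightarrow> sat V c R e' (star G) \<longrightarrow> sat V c R e (star G))"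
  using assms
proof (induction G arbitrary: pol)
  case (FPred p ts)
  then show ?case using wr_mono2[of x q pol "FPred p ts" U c R e' V e] sat_agree[of "star (FPred p ts)" e e' V c R]
    by (metis safe_occ.simps(2) fv_star)
next
  case (FEq s t)
  then show ?case using wr_mono2[of x q pol "FEq s t" U c R e' V e] sat_agree[of "star (FEq s t)" e e' V c R]
    by (metis safe_occ.simps(3) fv.simps(3) fv_star)
next
  case (FAnd G H)
  from FAnd.prems(1) consider "wr_cond x q pol (FAnd G H)" | "safe_occ x q pol G" "safe_occ x q pol H" by auto
  then show ?case
  proof cases
    case 1 then show ?thesis using wr_mono2[of x q pol "FAnd G H" U c R e' V e, OF 1 FAnd.prems(2,3,5)] by blast
  next
    case 2
    have g: "good2 U c R G" "good2 U c R H" using FAnd.prems(3) by (auto simp: good2_def)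
    have "qfree G" "qfree H" using FAnd.prems(2) by auto
    show ?thesis using FAnd.IH(1)[OF 2(1) \<open>qfree G\<close> g(1) FAnd.prems(4,5)] FAnd.IH(2)[OF 2(2) \<open>qfree H\<close> g(2) FAnd.prems(4,5)] by auto
  qed
next
  case (FOr G H)
  from FOr.prems(1) consider "wr_cond x q pol (FOr G H)" | "safe_occ x q pol G" "safe_occ x q pol H" by auto
  then show ?case
  proof cases
    case 1 then show ?thesis using wr_mono2[of x q pol "FOr G H" U c R e' V e, OF 1 FOr.prems(2,3,5)] by blast
  next
    case 2
    have g: "good2 U c R G" "good2 U c R H" using FOr.prems(3) by (auto simp: good2_def)
    have "qfree G" "qfree H" using FOr.prems(2) by auto
    show ?thesis using FOr.IH(1)[OF 2(1) \<open>qfree G\<close> g(1) FOr.prems(4,5)] FOr.IH(2)[OF 2(2) \<open>qfree H\<close> g(2) FOr.prems(4,5)] by auto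
  qed
next
  case (FImp G H)
  from FImp.prems(1) consider "wr_cond x q pol (FImp G H)" | "safe_occ x q (\<not>pol) G" "safe_occ x q pol H" by auto
  then show ?case
  proof cases
    case 1 then show ?thesis using wr_mono2[of x q pol "FImp G H" U c R e' V e, OF 1 FImp.prems(2,3,5)] by blast
  next
    case 2
    have g: "good2 U c R G" "good2 U c R H" using FImp.prems(3) by (auto simp: good2_def)
    have "qfree G" "qfree H" using FImp.prems(2) by auto
    have M: "(q = pol \<longrightarrow> sat V c (\<lambda>p. R (Inl p)) e (FImp G H) \<longrightarrow> sat V c (\<lambda>p. R (Inl p)) e' (FImp G H)) \<and>
      (q \<noteq> pol \<longrightarrow> sat V c (\<lambda>p. R (Inl p)) e' (FImp G H) \<longrightarrow> sat V c (\<lambda>p. R (Inl p)) e (FImp G H))"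
      using mono1[OF FImp.prems(1,2) good2_good[OF FImp.prems(3)] FImp.prems(4,5)] .
    show ?thesis using FImp.IH(1)[OF 2(1) \<open>qfree G\<close> g(1) FImp.prems(4,5)] FImp.IH(2)[OF 2(2) \<open>qfree H\<close> g(2) FImp.prems(4,5)] M
      by (auto simp: sat_map_Inl)
  qed
qed auto

lemma quant_mono:
  assumes "x \<notin> snd ` set qs"
    and "\<forall>e1 e2. S e1 e2 \<longrightarrow> sat V c R e1 M \<longrightarrow> sat V c R e2 M"
    and "\<forall>e1 e2 y a. y \<noteq> x \<longrightarrow> S e1 e2 \<longrightarrow> S (e1(y:=a)) (e2(y:=a))"
  shows "S e1 e2 \<Longrightarrow> sat V c R e1 (quant qs M) \<Longrightarrow> sat V c R e2 (quant qs M)"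
  using assms(1)
proof (induction qs arbitrary: e1 e2)
  case Nil
  then show ?case using assms(2) by simp
next
  case (Cons bq qs)
  obtain b y where bq: "bq = (b, y)" by force
  have yx: "y \<noteq> x" using Cons.prems(3) bq by auto
  have nx: "x \<notin> snd ` set qs" using Cons.prems(3) by auto
  have S': "S (e1(y:=a)) (e2(y:=a))" for a using assms(3) yx Cons.prems(1) by blast
  have step: "sat V c R (e2(y:=a)) (quant qs M)" if "sat V c R (e1(y:=a)) (quant qs M)" for a
    using Cons.IH[OF S' that nx] .
  show ?case
  proof (cases b)
    case True
    then have "\<forall>a\<in>V. sat V c R (e1(y:=a)) (quant qs M)" using Cons.prems(2) bq by simp
    then show ?thesis using step bq True by simp
  next
    case False
    then have "\<exists>a\<in>V. sat V c R (e1(y:=a)) (quant qs M)" using Cons.prems(2) bq by simp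
    then show ?thesis using step bq False by auto
  qed
qed

lemma sat_qfree_univ: "qfree G \<Longrightarrow> sat V c R e G = sat W c R e G"
  by (induction G) auto

definition monoQ :: "nat \<Rightarrow> bool \<Rightarrow> 'a set \<Rightarrow> ('c \<Rightarrow> 'a) \<Rightarrow> ('q \<Rightarrow> 'a list set) \<Rightarrow> ('q, 'c) form \<Rightarrow> bool" where
  "monoQ x q U c R N \<longleftrightarrow> (\<forall>V e e'. (\<forall>v. v \<noteq> x \<longrightarrow> e v = e' v) \<longrightarrow> e' x \<notin> U \<longrightarrow>
     (q \<longrightarrow> sat V c R e N \<longrightarrow> sat V c R e' N) \<and> (\<not> q \<longrightarrow> sat V c R e' N \<longrightarrow> sat V c R e N))"

lemma quant_main:
  assumes "distinct (map snd qs)" "U \<noteq> {}" "U \<subseteq> X" "\<forall>(q, x)\<in>set qs. monoQ x q U c R M" "qfree M"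
  shows "(\<forall>v. e v \<in> U) \<Longrightarrow> sat X c R e (quant qs M) = sat U c R e (quant qs M)"
  using assms(1,4)
proof (induction qs arbitrary: e)
  case Nil
  then show ?case using sat_qfree_univ[OF assms(5)] by simp
next
  case (Cons bq qs)
  obtain b x where bq: "bq = (b, x)" by force
  have nx: "x \<notin> snd ` set qs" using Cons.prems(2) bq by auto
  have mq: "monoQ x b U c R M" using Cons.prems(3) bq by auto
  have d: "distinct (map snd qs)" using Cons.prems(2) by simp
  have m: "\<forall>(q, x)\<in>set qs. monoQ x q U c R M" using Cons.prems(3) by simp
  have IH: "sat X c R (e(x:=a)) (quant qs M) = sat U c R (e(x:=a)) (quant qs M)" if "a \<in> U" for a
  proof -
    have "\<forall>v. (e(x:=a)) v \<in> U" using that Cons.prems(1) by simp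
    then show ?thesis using Cons.IH d m by blast
  qed
  obtain u where u: "u \<in> U" using assms(2) by auto
  show ?case
  proof (cases b)
    case True
    have "sat X c R (e(x:=a)) (quant qs M)" if a: "a \<in> X" and H: "\<forall>a\<in>U. sat U c R (e(x:=a)) (quant qs M)" for a
    proof (cases "a \<in> U")
      case True then show ?thesis using IH H by auto
    next
      case False
      let ?S = "\<lambda>e1 e2. (\<forall>v. v \<noteq> x \<longrightarrow> e1 v = e2 v) \<and> e2 x \<notin> U"
      have m: "\<forall>e1 e2. ?S e1 e2 \<longrightarrow> sat X c R e1 M \<longrightarrow> sat X c R e2 M"
        using mq \<open>b\<close> unfolding monoQ_def by blast
      have p: "\<forall>e1 e2 y a. y \<noteq> x \<longrightarrow> ?S e1 e2 \<longrightarrow> ?S (e1(y:=a)) (e2(y:=a))" by auto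
      have "sat X c R (e(x:=u)) (quant qs M)" using IH[OF u] H u by auto
      then show ?thesis using quant_mono[of x qs ?S X c R M, OF nx m p, of "e(x:=u)" "e(x:=a)"] False by auto
    qed
    then show ?thesis using True bq IH assms(3) by auto
  next
    case False
    have "\<exists>a\<in>U. sat U c R (e(x:=a)) (quant qs M)" if a: "a \<in> X" and H: "sat X c R (e(x:=a)) (quant qs M)" for a
    proof (cases "a \<in> U")
      case True then show ?thesis using IH H by auto
    next
      case False
      let ?S = "\<lambda>e1 e2. (\<forall>v. v \<noteq> x \<longrightarrow> e1 v = e2 v) \<and> e1 x \<notin> U"
      have m: "\<forall>e1 e2. ?S e1 e2 \<longrightarrow> sat X c R e1 M \<longrightarrow> sat X c R e2 M"
        using mq \<open>\<not> b\<close> unfolding monoQ_def by (metis fun_upd_other)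
      have p: "\<forall>e1 e2 y a. y \<noteq> x \<longrightarrow> ?S e1 e2 \<longrightarrow> ?S (e1(y:=a)) (e2(y:=a))" by auto
      have "sat X c R (e(x:=u)) (quant qs M)"
        using quant_mono[of x qs ?S X c R M, OF nx m p, of "e(x:=a)" "e(x:=u)"] False H by auto
      then show ?thesis using IH[OF u] u by auto
    qed
    then show ?thesis using False bq IH assms(3) by auto
  qed
qed


lemma preds_quant[simp]: "preds (quant qs M) = preds M"
  by (induction qs M rule: quant.induct) auto
lemma oconsts_quant[simp]: "oconsts (quant qs M) = oconsts M"
  by (induction qs M rule: quant.induct) auto
lemma star_quant: "star (quant qs M) = quant qs (star M)"
  by (induction qs M rule: quant.induct) auto
lemma qfree_map: "qfree M \<Longrightarrow> qfree (map_form f g M)"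
  by (induction M) auto
lemma qfree_star: "qfree M \<Longrightarrow> qfree (star M)"
  by (induction M) (auto simp: qfree_map)

lemma models_transfer:
  assumes "fv F = {}" "U \<noteq> {}" "U \<subseteq> X" "\<And>e. (\<forall>v. e v \<in> U) \<Longrightarrow> sat X c R e F = sat U c R e F"
  shows "models X c R F = models U c R F"
proof -
  obtain u where u: "u \<in> U" using assms(2) by auto
  let ?e0 = "\<lambda>_::nat. u"
  have e0: "\<forall>v. ?e0 v \<in> U" "\<forall>v. ?e0 v \<in> X" using u assms(3) by auto
  have agX: "sat X c R e F = sat X c R ?e0 F" for e by (rule sat_agree) (simp add: assms(1))
  have agU: "sat U c R e F = sat U c R ?e0 F" for e by (rule sat_agree) (simp add: assms(1))
  show ?thesis unfolding models_def using e0 assms(4)[OF e0(1)] agX agU by metis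
qed

theorem proposition5:
  fixes F :: "('p, 'c) form" and ar :: "'p \<Rightarrow> nat"
    and U X :: "'a set" and c :: "'c \<Rightarrow> 'a" and P :: "'p \<Rightarrow> 'a list set"
  assumes "safe F"
    and "wf_form ar F"
    and "wf_interp ar F U c P"
    and "U \<subseteq> X"
  shows "stable_model ar F X c P \<longleftrightarrow> stable_model ar F U c P"
proof -
  obtain qs M where pre: "prenex_sentence qs M F" and so: "\<forall>(q, x)\<in>set qs. safe_occ x q True M"
    using assms(1) unfolding safe_def by blast
  have F: "F = quant qs M" and qf: "qfree M" and dist: "distinct (map snd qs)" and fvF: "fv F = {}"
    using pre unfolding prenex_sentence_def sentence_def by auto
  have wi: "U \<noteq> {} \<and> (\<forall>k\<in>oconsts F. c k \<in> U) \<and> (\<forall>p\<in>preds F. P p \<subseteq> tuples ar p U)"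
    using assms(3) unfolding wf_interp_def .
  have Une: "U \<noteq> {}" using wi by simp
  have cU: "\<forall>k\<in>oconsts M. c k \<in> U" using wi F by simp
  have PU: "\<forall>p\<in>preds M. P p \<subseteq> tuples ar p U" using wi F by simp
  have PU': "\<forall>p\<in>preds M. \<forall>xs\<in>P p. set xs \<subseteq> U" using PU unfolding tuples_def by blast
  have good: "good U c P M" unfolding good_def using PU' cU by blast
  have so': "safe_occ x q True M" if "(q, x) \<in> set qs" for q x using so that by auto
  have mq1: "monoQ x q U c P M" if "(q, x) \<in> set qs" for q x
    unfolding monoQ_def
  proof (intro allI impI)
    fix V e e' assume A: "\<forall>v. v \<noteq> x \<longrightarrow> e v = e' v" and B: "e' x \<notin> U"
    show "(q \<longrightarrow> sat V c P e M \<longrightarrow> sat V c P e' M) \<and> (\<not> q \<longrightarrow> sat V c P e' M \<longrightarrow> sat V c P e M)"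
      using mono1[OF so'[OF that] qf good A B, of V] by (cases q) auto
  qed
  have part1: "models X c P F = models U c P F"
  proof (rule models_transfer[OF fvF Une assms(4)])
    fix e :: "nat \<Rightarrow> 'a" assume eU: "\<forall>v. e v \<in> U"
    have "\<forall>(q, x)\<in>set qs. monoQ x q U c P M" using mq1 by auto
    from quant_main[OF dist Une assms(4) this qf eU]
    show "sat X c P e F = sat U c P e F" unfolding F .
  qed
  have part2: "models X c (\<lambda>r. case r of Inl p \<Rightarrow> P p | Inr p \<Rightarrow> Q p) (star F)
             = models U c (\<lambda>r. case r of Inl p \<Rightarrow> P p | Inr p \<Rightarrow> Q p) (star F)"
    if QP: "\<forall>p\<in>preds F. Q p \<subseteq> P p" for Q
  proof -
    let ?R = "\<lambda>r. case r of Inl p \<Rightarrow> P p | Inr p \<Rightarrow> Q p"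
    have QP': "\<forall>p\<in>preds M. Q p \<subseteq> P p" using QP F by simp
    have good2: "good2 U c ?R M" unfolding good2_def using PU' cU QP' by (auto; blast)
    have mq2: "monoQ x q U c ?R (star M)" if "(q, x) \<in> set qs" for q x
      unfolding monoQ_def
    proof (intro allI impI)
      fix V e e' assume A: "\<forall>v. v \<noteq> x \<longrightarrow> e v = e' v" and B: "e' x \<notin> U"
      show "(q \<longrightarrow> sat V c ?R e (star M) \<longrightarrow> sat V c ?R e' (star M)) \<and> (\<not> q \<longrightarrow> sat V c ?R e' (star M) \<longrightarrow> sat V c ?R e (star M))"
        using mono2[OF so'[OF that] qf good2 A B, of V] by (cases q) auto
    qed
    have fvs: "fv (star F) = {}" using fvF by simp
    show ?thesis
    proof (rule models_transfer[OF fvs Une assms(4)])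
      fix e :: "nat \<Rightarrow> 'a" assume eU: "\<forall>v. e v \<in> U"
      have "\<forall>(q, x)\<in>set qs. monoQ x q U c ?R (star M)" using mq2 by auto
      from quant_main[OF dist Une assms(4) this qfree_star[OF qf] eU]
      show "sat X c ?R e (star F) = sat U c ?R e (star F)" unfolding F star_quant .
    qed
  qed
  have tup: "(\<forall>p\<in>preds F. Q p \<subseteq> tuples ar p X) = (\<forall>p\<in>preds F. Q p \<subseteq> tuples ar p U)"
    if QP: "\<forall>p\<in>preds F. Q p \<subseteq> P p" for Q
  proof -
    have "tuples ar p U \<subseteq> tuples ar p X" for p using assms(4) unfolding tuples_def by auto
    moreover have "\<forall>p\<in>preds F. Q p \<subseteq> tuples ar p U" using QP PU F by auto
    ultimately show ?thesis by blast
  qed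
  let ?C = "\<lambda>W Q. (\<forall>p\<in>preds F. Q p \<subseteq> tuples ar p W) \<and> (\<forall>p\<in>preds F. Q p \<subseteq> P p)
          \<and> \<not> (\<forall>p\<in>preds F. Q p = P p)
          \<and> models W c (\<lambda>r. case r of Inl p \<Rightarrow> P p | Inr p \<Rightarrow> Q p) (star F)"
  have ex: "?C X Q = ?C U Q" for Q
  proof (cases "\<forall>p\<in>preds F. Q p \<subseteq> P p")
    case True
    show ?thesis using tup[OF True] part2[OF True] by simp
  next
    case False
    then show ?thesis by blast
  qed
  show ?thesis
    unfolding stable_model_def part1 using ex by simp
qed

end
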